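(* Let $f(z)=e^z$ and let $W\subset\mathbb{C}$ be open and nonempty. Then there are infinitely many integers $n\geq 0$ such that $f^n(W)\cap(-\infty,0]\neq\emptyset$.
   Context: $f^n$ denotes the $n$-th iterate of $f$ ($f^0=\mathrm{id}$). *)

theory Defs
  imports "HOL-Analysis.Analysis"
begin

end

theory Submission
  imports Defs "HOL-Complex_Analysis.Complex_Analysis"
begin



lemma strip_schwarz:
  fixes g :: "complex \<Rightarrow> complex"
  assumes hol: "g holomorphic_on ball c r" and r: "r > 0"
  and der: "(g has_field_derivative g') (at c)"
  and sub: "\<And>z. z \<in> ball c r \<Longrightarrow> a < Im (g z) \<and> Im (g z) < a + pi"
  shows "norm g' * r \<le> 2 * sin (Im (g c) - a)"
proof -
  define q where "q u = g (c + of_real r * u) - \<i> * of_real a" for u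
  define w0 where "w0 = exp (q 0)"
  define h where "h u = (exp (q u) - w0) / (exp (q u) - cnj w0)" for u
  have Imexp: "Im (exp (q u)) = exp (Re (g (c + of_real r * u))) * sin (Im (g (c + of_real r * u)) - a)" for u
    by (simp add: q_def Im_exp)
  have pos: "Im (exp (q u)) > 0" if "norm u < 1" for u
  proof -
    have "c + of_real r * u \<in> ball c r" using that r by (auto simp: dist_norm norm_mult)
    from sub[OF this] have "0 < Im (g (c + of_real r * u)) - a" "Im (g (c + of_real r * u)) - a < pi" by auto
    hence "sin (Im (g (c + of_real r * u)) - a) > 0" by (rule sin_gt_zero)
    thus ?thesis by (simp add: Imexp)
  qed
  have w0pos: "Im w0 > 0" using pos[of 0] by (simp add: w0_def)
  have den: "exp (q u) - cnj w0 \<noteq> 0" if "norm u < 1" for u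
  proof
    assume "exp (q u) - cnj w0 = 0"
    hence "Im (exp (q u)) = - Im w0" by (metis complex_cnj_cancel_iff complex_cnj_cnj complex_cnj_diff complex_cnj_zero_iff right_minus_eq cnj.sel(2))
    with pos[OF that] w0pos show False by simp
  qed
  have holq: "q holomorphic_on ball 0 1"
  proof -
    have "(\<lambda>u. g (c + of_real r * u)) holomorphic_on ball 0 1"
    proof (rule holomorphic_on_compose_gen[where g = g and t = "ball c r", unfolded o_def])
      show "(\<lambda>u. c + of_real r * u) holomorphic_on ball 0 1" by (intro holomorphic_intros)
      show "g holomorphic_on ball c r" by fact
      show "(\<lambda>u. c + of_real r * u) ` ball 0 1 \<subseteq> ball c r" using r by (auto simp: dist_norm norm_mult)
    qed
    thus ?thesis unfolding q_def by (intro holomorphic_intros)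
  qed
  have holh: "h holomorphic_on ball 0 1"
    unfolding h_def using den holq by (intro holomorphic_intros) auto
  have h0: "h 0 = 0" by (simp add: h_def w0_def)
  have hlt: "norm (h u) < 1" if "norm u < 1" for u
  proof -
    let ?w = "exp (q u)"
    have "(norm (?w - w0))^2 < (norm (?w - cnj w0))^2"
      using pos[OF that] w0pos unfolding cmod_power2 by (simp add: power2_eq_square algebra_simps)
    hence "norm (?w - w0) < norm (?w - cnj w0)" by (simp add: power_less_imp_less_base)
    thus ?thesis using den[OF that] by (simp add: h_def norm_divide divide_less_eq)
  qed
  have dq: "(q has_field_derivative g' * of_real r) (at 0)"
  proof -
    have d1: "((\<lambda>u. c + of_real r * u) has_field_derivative of_real r) (at 0)"
      by (auto intro!: derivative_eq_intros)
    have d0: "DERIV g ((\<lambda>u. c + of_real r * u) 0) :> g'" using der by simp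
    have "((\<lambda>u. g (c + of_real r * u)) has_field_derivative g' * of_real r) (at 0)"
      using DERIV_chain2[OF d0 d1] by simp
    thus ?thesis unfolding q_def by (auto intro!: derivative_eq_intros)
  qed
  have dh: "(h has_field_derivative (w0 * g' * of_real r) / (w0 - cnj w0)) (at 0)"
  proof -
    have de: "((\<lambda>u. exp (q u)) has_field_derivative w0 * (g' * of_real r)) (at 0)"
      using DERIV_chain2[OF DERIV_exp dq] by (simp add: w0_def)
    have "w0 - cnj w0 \<noteq> 0" using den[of 0] by (simp add: w0_def)
    have "(h has_field_derivative ((w0 * (g' * of_real r)) * (w0 - cnj w0) - (w0 - w0) * (w0 * (g' * of_real r))) / (w0 - cnj w0)^2) (at 0)"
    proof -
      have a1: "((\<lambda>u. exp (q u) - w0) has_field_derivative w0 * (g' * of_real r)) (at 0)"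
        using DERIV_diff[OF de DERIV_const] by simp
      have a2: "((\<lambda>u. exp (q u) - cnj w0) has_field_derivative w0 * (g' * of_real r)) (at 0)"
        using DERIV_diff[OF de DERIV_const] by simp
      show ?thesis unfolding h_def using DERIV_divide[OF a1 a2] den[of 0]
        by (simp add: w0_def power2_eq_square)
    qed
    moreover have "((w0 * (g' * of_real r)) * (w0 - cnj w0) - (w0 - w0) * (w0 * (g' * of_real r))) / (w0 - cnj w0)^2 = (w0 * g' * of_real r) / (w0 - cnj w0)"
      using \<open>w0 - cnj w0 \<noteq> 0\<close> by (simp add: power2_eq_square mult.assoc)
    ultimately show ?thesis by simp
  qed
  have "norm (deriv h 0) \<le> 1"
    using Schwarz_Lemma(2)[OF holh h0 hlt, of 0] by auto
  hence le: "norm ((w0 * g' * of_real r) / (w0 - cnj w0)) \<le> 1" using DERIV_imp_deriv[OF dh] by simp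
  have "w0 - cnj w0 = 2 * \<i> * of_real (Im w0)" by (simp add: complex_eq_iff)
  hence nd: "norm (w0 - cnj w0) = 2 * Im w0" using w0pos by (simp add: norm_mult)
  have nw: "norm w0 = exp (Re (g c))" by (simp add: w0_def q_def)
  have iw: "Im w0 = exp (Re (g c)) * sin (Im (g c) - a)" using Imexp[of 0] by (simp add: w0_def)
  from le have "norm w0 * norm g' * r \<le> 2 * Im w0" using nd w0pos r by (simp add: norm_divide norm_mult divide_le_eq)
  hence "exp (Re (g c)) * (norm g' * r) \<le> exp (Re (g c)) * (2 * sin (Im (g c) - a))"
    by (simp add: nw iw algebra_simps)
  thus ?thesis by simp
qed



lemma sin_taylor: "\<bar>sin (x::real) - (x - x^3/6)\<bar> \<le> \<bar>x\<bar>^5/120"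
proof -
  have e: "(\<Sum>m<5. sin_coeff m * x ^ m) = sin_coeff 0 * x^0 + sin_coeff 1 * x^1 + sin_coeff 2 * x^2 + sin_coeff 3 * x^3 + sin_coeff 4 * x^4"
    by (simp add: eval_nat_numeral)
  have "sin_coeff 0 = 0" "sin_coeff 1 = 1" "sin_coeff 2 = 0" "sin_coeff 3 = -1/6" "sin_coeff 4 = 0"
    by (simp_all add: sin_coeff_def fact_numeral)
  hence "(\<Sum>m<5. sin_coeff m * x ^ m) = x - x^3/6" using e by simp
  moreover have inv: "inverse (fact 5) = (1/120::real)"
    by (simp add: fact_numeral)
  moreover have "\<bar>sin x - (\<Sum>m<5. sin_coeff m * x ^ m)\<bar> \<le> inverse (fact 5) * \<bar>x\<bar> ^ 5"
    using Maclaurin_sin_bound by blast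
  ultimately show ?thesis by (simp only: inv)
qed

lemma abs_sin_abs: "\<bar>sin \<bar>y::real\<bar>\<bar> = \<bar>sin y\<bar>"
  by (cases "y \<ge> 0") (auto simp: sin_minus)

lemma sin_upper: fixes y :: real assumes "1 \<le> \<bar>y\<bar>" shows "\<bar>sin y\<bar> \<le> (17/20) * \<bar>y\<bar>"
proof (cases "\<bar>y\<bar> \<le> 2")
  case True
  define t where "t = \<bar>y\<bar>"
  define s where "s = t^2"
  have t12: "1 \<le> t" "t \<le> 2" using assms True by (auto simp: t_def)
  have s14: "1 \<le> s" "s \<le> 4" unfolding s_def using t12 power_mono[of 1 t 2] power_mono[of t 2 2] by auto
  have A: "\<bar>sin t - (t - t^3/6)\<bar> \<le> t^5/120" using sin_taylor[of t] by (simp add: t_def)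
  have e3: "t - t^3/6 = t * (1 - s/6)" "t^5/120 = t * (s^2/120)"
    by (simp_all add: s_def algebra_simps eval_nat_numeral)
  have "(s-1)*(s-4) \<le> 0" using s14 by (simp add: mult_nonneg_nonpos)
  hence "s * s \<le> 5 * s - 4" by (simp add: algebra_simps)
  hence "1 - s/6 + s^2/120 \<le> 17/20" using s14 unfolding power2_eq_square by linarith
  hence "t * (1 - s/6 + s^2/120) \<le> t * (17/20)" using t12
    by (intro mult_left_mono) auto
  moreover have "t * (1 - s/6) + t * (s^2/120) = t * (1 - s/6 + s^2/120)" by (simp add: algebra_simps)
  ultimately have B: "t * (1 - s/6) + t * (s^2/120) \<le> t * (17/20)" by simp
  have "sin t \<le> t * (1 - s/6) + t * (s^2/120)" using A unfolding e3 by linarith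
  hence "sin t \<le> (17/20)*t" using B by linarith
  moreover have "sin t \<ge> 0" using t12 pi_gt3 by (intro sin_ge_zero) auto
  ultimately have "\<bar>sin t\<bar> \<le> (17/20)*t" by simp
  thus ?thesis by (simp add: t_def abs_sin_abs)
next
  case False
  thus ?thesis using abs_sin_le_one[of y] by linarith
qed

lemma pow_le_self: fixes t :: real assumes "0 \<le> t" "t \<le> 1" "n \<ge> 1" shows "t^n \<le> t"
proof -
  obtain k where "n = Suc k" using assms(3) by (cases n) auto
  hence "t^n = t * t^k" by simp
  also have "\<dots> \<le> t * 1" using assms by (intro mult_left_mono power_le_one) auto
  finally show ?thesis by simp
qed

lemma sin_lower: fixes y :: real assumes "\<bar>y\<bar> < 1" shows "\<bar>sin y\<bar> \<ge> (4/5) * \<bar>y\<bar>"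
proof -
  define t where "t = \<bar>y\<bar>"
  have "\<bar>sin t - (t - t^3/6)\<bar> \<le> t^5/120" using sin_taylor[of t] by (simp add: t_def)
  moreover have "0 \<le> t" "t < 1" using assms by (auto simp: t_def)
  moreover have "t^3 \<le> t" "t^5 \<le> t" using \<open>0 \<le> t\<close> \<open>t < 1\<close> by (auto intro: pow_le_self)
  ultimately have "sin t \<ge> (4/5) * t" by linarith
  hence "\<bar>sin t\<bar> \<ge> (4/5) * t" by linarith
  thus ?thesis by (simp add: t_def abs_sin_abs)
qed

lemma cos_lower: fixes y :: real assumes "\<bar>y\<bar> < 1" shows "cos y \<ge> 1/2"
proof -
  have c: "cos y = 1 - 2 * (sin (y/2))^2" using cos_double_sin[of "y/2"] by simp
  have h: "\<bar>sin (y/2)\<bar> \<le> 1/2" using abs_sin_x_le_abs_x[of "y/2"] assms by simp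
  have "(sin (y/2))^2 = \<bar>sin (y/2)\<bar> * \<bar>sin (y/2)\<bar>" by (simp add: power2_eq_square)
  also have "\<dots> \<le> (1/2) * (1/2)" using h by (intro mult_mono) auto
  finally have "(sin (y/2))^2 \<le> 1/4" by simp
  thus ?thesis using c by linarith
qed



lemma iter_Suc: "(exp ^^ Suc n) z = exp ((exp ^^ n) z)" by simp

lemma iter_deriv: "(((exp::complex\<Rightarrow>complex) ^^ n) has_field_derivative (\<Prod>j\<in>{1..n}. (exp ^^ j) z)) (at z)"
proof (induction n)
  case 0
  then show ?case by (simp add: DERIV_ident[unfolded id_def] id_def)
next
  case (Suc n)
  have A: "((\<lambda>z. exp ((exp ^^ n) z)) has_field_derivative exp ((exp ^^ n) z) * (\<Prod>j\<in>{1..n}. (exp ^^ j) z)) (at z)"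
    by (rule DERIV_chain2[OF DERIV_exp Suc.IH])
  have E: "exp ((exp ^^ n) z) * (\<Prod>j\<in>{1..n}. (exp ^^ j) z) = (\<Prod>j\<in>{1..Suc n}. (exp ^^ j) z)"
    by (subst prod.nat_ivl_Suc') simp_all
  have eqf: "(exp ^^ Suc n) = (\<lambda>z. exp ((exp ^^ n) z))" by (simp add: fun_eq_iff)
  from A have "((exp ^^ Suc n) has_field_derivative exp ((exp ^^ n) z) * (\<Prod>j\<in>{1..n}. (exp ^^ j) z)) (at z)"
    by (simp only: eqf)
  thus ?case by (simp only: E)
qed

lemma iter_hol: "(exp ^^ n) holomorphic_on S"
proof -
  have "(exp^^n) field_differentiable (at z within S)" for z
    unfolding field_differentiable_def
    by (rule exI, rule has_field_derivative_at_within[OF iter_deriv])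
  thus ?thesis unfolding holomorphic_on_def by blast
qed

lemma iter_cont: "continuous_on S ((exp::complex\<Rightarrow>complex) ^^ n)"
  by (rule holomorphic_on_imp_continuous_on[OF iter_hol])

lemma exp_open_image: "open U \<Longrightarrow> open (exp ` (U::complex set))"
proof -
  assume "open U"
  moreover have "\<not> exp constant_on (UNIV::complex set)"
  proof
    assume "exp constant_on (UNIV::complex set)"
    then obtain k where "\<And>z::complex. exp z = k" by (auto simp: constant_on_def)
    from this[of 0] this[of 1] have "exp (1::complex) = 1" by simp
    hence "Re (exp (1::complex)) = 1" by simp
    hence "exp (1::real) = 1" by (simp add: Re_exp)
    thus False by simp
  qed
  ultimately show "open (exp ` U)"
    by (intro open_mapping_thm[of exp UNIV]) (simp_all add: holomorphic_on_exp connected_UNIV)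
qed

lemma iter_open: assumes "open (U::complex set)" shows "open ((exp ^^ n) ` U)"
proof (induction n)
  case 0 thus ?case using assms by simp
next
  case (Suc n)
  have "(exp ^^ Suc n) ` U = exp ` ((exp ^^ n) ` U)" by (auto simp: image_comp)
  thus ?case using exp_open_image[OF Suc.IH] by (simp only:)
qed

lemma conn_Im:
  assumes "connected S" "a \<in> S" "b \<in> S" "Im a \<le> t" "t \<le> Im b"
  shows "\<exists>w\<in>S. Im w = t"
proof -
  have "inner \<i> a \<le> t" "t \<le> inner \<i> b" using assms(4,5) by simp_all
  from connected_ivt_hyperplane[OF assms(1-3) this] show ?thesis by simp
qed




lemma real_orbit: "((exp::complex\<Rightarrow>complex) ^^ j) (complex_of_real t) = complex_of_real (((exp::real\<Rightarrow>real) ^^ j) t)"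
  by (induction j) (simp_all add: exp_of_real)

lemma real_orbit_ge: "((exp::real\<Rightarrow>real) ^^ j) t \<ge> t + real j"
proof (induction j)
  case 0 thus ?case by simp
next
  case (Suc j)
  have "exp (((exp::real\<Rightarrow>real) ^^ j) t) \<ge> 1 + ((exp::real\<Rightarrow>real) ^^ j) t" by (rule exp_ge_add_one_self)
  moreover have "((exp::real\<Rightarrow>real) ^^ Suc j) t = exp (((exp::real\<Rightarrow>real) ^^ j) t)" by simp
  ultimately show ?case using Suc by linarith
qed

lemma prod_ge_j:
  fixes f :: "nat \<Rightarrow> real"
  assumes "\<And>i. 1 \<le> i \<Longrightarrow> 1 \<le> f i \<and> real i \<le> f i"
  shows "real j \<le> (\<Prod>i\<in>{1..j}. f i)"
proof (induction j)
  case 0 thus ?case by simp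
next
  case (Suc j)
  have p1: "1 \<le> (\<Prod>i\<in>{1..j}. f i)" by (rule prod_ge_1) (use assms in auto)
  have f: "real (Suc j) \<le> f (Suc j)" using assms[of "Suc j"] by simp
  have "real (Suc j) * 1 \<le> f (Suc j) * (\<Prod>i\<in>{1..j}. f i)"
    by (rule mult_mono[OF f p1]) (use f in auto)
  moreover have "(\<Prod>i\<in>{1..Suc j}. f i) = f (Suc j) * (\<Prod>i\<in>{1..j}. f i)" by (rule prod.nat_ivl_Suc') simp
  ultimately show ?case by (simp add: mult.commute)
qed

lemma exp_neg_line:
  assumes "Im v = pi \<or> Im v = - pi"
  shows "exp v \<in> \<real>" "Re (exp v) \<le> 0"
proof -
  have "sin (Im v) = 0" "cos (Im v) = -1" using assms by auto
  thus "exp v \<in> \<real>" "Re (exp v) \<le> 0" by (simp_all add: complex_is_Real_iff Im_exp Re_exp)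
qed

lemma case1:
  fixes U :: "complex set"
  assumes U: "open U"
    and avoid: "\<And>n. ((exp :: complex \<Rightarrow> complex) ^^ n) ` U \<inter> {z. z \<in> \<real> \<and> Re z \<le> 0} = {}"
    and p: "complex_of_real t \<in> ((exp :: complex \<Rightarrow> complex) ^^ m) ` U" and t: "t > 0"
  shows False
proof -
  obtain e where e: "e > 0" "ball (complex_of_real t) e \<subseteq> ((exp :: complex \<Rightarrow> complex) ^^ m) ` U"
    using iter_open[OF U, of m] p by (meson openE)
  define B where "B = ball (complex_of_real t) e"
  have img: "((exp :: complex \<Rightarrow> complex) ^^ j) w \<in> (exp ^^ (j + m)) ` U" if "w \<in> B" for w j
  proof -
    have "w \<in> (exp ^^ m) ` U" using that e(2) unfolding B_def by blast
    then obtain u where "u \<in> U" "w = (exp ^^ m) u" by blast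
    thus ?thesis by (simp add: funpow_add)
  qed
  have notneg: "\<not> (((exp :: complex \<Rightarrow> complex) ^^ j) w \<in> \<real> \<and> Re (((exp :: complex \<Rightarrow> complex) ^^ j) w) \<le> 0)"
    if "w \<in> B" for w j
    using avoid[of "j + m"] img[OF that, of j] by blast
  have strip: "- pi < Im ((exp ^^ j) w) \<and> Im (((exp :: complex \<Rightarrow> complex) ^^ j) w) < pi" if "w \<in> B" for w j
  proof -
    let ?S = "((exp :: complex \<Rightarrow> complex) ^^ j) ` B"
    have conn: "connected ?S" unfolding B_def
      by (rule connected_continuous_image[OF iter_cont connected_ball])
    have pS: "(exp ^^ j) (complex_of_real t) \<in> ?S" using e(1) by (simp add: B_def)
    have pIm: "Im (((exp :: complex \<Rightarrow> complex) ^^ j) (complex_of_real t)) = 0" by (simp add: real_orbit)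
    have wS: "(exp ^^ j) w \<in> ?S" using that by simp
    have bad: False if "v \<in> ?S" "Im v = pi \<or> Im v = - pi" for v
    proof -
      obtain w' where w': "w' \<in> B" "v = (exp ^^ j) w'" using \<open>v \<in> ?S\<close> by auto
      have "(exp ^^ Suc j) w' = exp v" using w' by simp
      thus False using notneg[OF w'(1), of "Suc j"] exp_neg_line[OF that(2)] by simp
    qed
    show ?thesis
    proof (rule ccontr)
      assume "\<not> ?thesis"
      hence "Im ((exp ^^ j) w) \<le> - pi \<or> pi \<le> Im ((exp ^^ j) w)" by linarith
      thus False
      proof
        assume "Im ((exp ^^ j) w) \<le> - pi"
        then obtain v where "v \<in> ?S" "Im v = - pi" using conn_Im[OF conn wS pS, of "- pi"] pIm by auto
        thus False using bad by blast
      next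
        assume "pi \<le> Im ((exp ^^ j) w)"
        then obtain v where "v \<in> ?S" "Im v = pi" using conn_Im[OF conn pS wS, of pi] pIm by auto
        thus False using bad by blast
      qed
    qed
  qed
  define D where "D j = (\<Prod>i\<in>{1..j}. ((exp :: complex \<Rightarrow> complex) ^^ i) (complex_of_real t))" for j
  have Dbound: "norm (D j) \<le> 4 / e" for j
  proof -
    define g where "g w = ((exp :: complex \<Rightarrow> complex) ^^ j) w / 2" for w
    have hol: "g holomorphic_on ball (complex_of_real t) e"
      unfolding g_def using iter_hol by (intro holomorphic_intros) auto
    have der: "(g has_field_derivative D j / 2) (at (complex_of_real t))"
      unfolding g_def D_def by (rule DERIV_cdivide[OF iter_deriv])
    have sub: "- pi / 2 < Im (g w) \<and> Im (g w) < - pi / 2 + pi" if "w \<in> ball (complex_of_real t) e" for w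
      using strip[of w j] that by (simp add: g_def B_def)
    have "norm (D j / 2) * e \<le> 2 * sin (Im (g (complex_of_real t)) - (- pi / 2))"
      by (rule strip_schwarz[OF hol e(1) der sub])
    also have "\<dots> \<le> 2" by simp
    finally have "norm (D j) * e \<le> 4" by (simp add: norm_divide)
    thus ?thesis using e(1) by (simp add: field_simps)
  qed
  have Dlow: "real j \<le> norm (D j)" for j
  proof -
    have "norm (D j) = (\<Prod>i\<in>{1..j}. ((exp::real\<Rightarrow>real) ^^ i) t)"
    proof -
      have "norm (D j) = (\<Prod>i\<in>{1..j}. norm (((exp :: complex \<Rightarrow> complex) ^^ i) (complex_of_real t)))"
        unfolding D_def by (simp add: prod_norm)
      also have "\<dots> = (\<Prod>i\<in>{1..j}. ((exp::real\<Rightarrow>real) ^^ i) t)"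
      proof (rule prod.cong[OF refl])
        fix i assume "i \<in> {1..j}"
        have "((exp::real\<Rightarrow>real) ^^ i) t \<ge> t + real i" by (rule real_orbit_ge)
        thus "norm (((exp :: complex \<Rightarrow> complex) ^^ i) (complex_of_real t)) = ((exp::real\<Rightarrow>real) ^^ i) t"
          using t by (simp add: real_orbit)
      qed
      finally show ?thesis .
    qed
    moreover have "real j \<le> (\<Prod>i\<in>{1..j}. ((exp::real\<Rightarrow>real) ^^ i) t)"
    proof (rule prod_ge_j)
      fix i :: nat assume "1 \<le> i"
      have "((exp::real\<Rightarrow>real) ^^ i) t \<ge> t + real i" by (rule real_orbit_ge)
      moreover have "real i \<ge> 1" using \<open>1 \<le> i\<close> by simp
      ultimately show "1 \<le> ((exp::real\<Rightarrow>real) ^^ i) t \<and> real i \<le> ((exp::real\<Rightarrow>real) ^^ i) t" using t by linarith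
    qed
    ultimately show ?thesis by simp
  qed
  obtain j :: nat where "real j > 4 / e" using reals_Archimedean2 by blast
  with Dbound[of j] Dlow[of j] show False by simp
qed



lemma abs_sin_shift: "\<bar>sin (y - pi * of_int k)\<bar> = \<bar>sin y\<bar>"
  by (simp add: sin_diff)

lemma case2:
  fixes U :: "complex set"
  assumes ball: "ball c r \<subseteq> U" and r: "r > 0"
    and avoidR: "\<And>n. ((exp::complex\<Rightarrow>complex) ^^ n) ` U \<inter> \<real> = {}"
  shows False
proof -
  define E where "E n = ((exp::complex\<Rightarrow>complex) ^^ n)" for n
  define z where "z n = E n c" for n
  define x where "x n = Re (z n)" for n
  define y where "y n = Im (z n)" for n
  have cU: "c \<in> U" using ball r by auto
  have zS: "z (Suc n) = exp (z n)" for n by (simp add: z_def E_def)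
  have xS: "x (Suc n) = exp (x n) * cos (y n)" for n by (simp add: x_def y_def zS Re_exp)
  have yS: "y (Suc n) = exp (x n) * sin (y n)" for n by (simp add: x_def y_def zS Im_exp)
  have nzS: "norm (z (Suc n)) = exp (x n)" for n by (simp add: x_def zS)
  have ynz: "y n \<noteq> 0" for n
  proof
    assume "y n = 0"
    hence "z n \<in> \<real>" by (simp add: y_def complex_is_Real_iff)
    moreover have "z n \<in> E n ` U" using cU by (simp add: z_def)
    ultimately show False using avoidR[of n] by (auto simp: E_def)
  qed
  have sinnz: "sin (y n) \<noteq> 0" for n using ynz[of "Suc n"] by (simp add: yS)
  have schw: "(\<Prod>j\<in>{1..n}. norm (z j)) * r \<le> 2 * \<bar>sin (y n)\<bar>" for n
  proof -
    define k where "k = \<lfloor>y n / pi\<rfloor>"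
    define a where "a = pi * of_int k"
    have "of_int k \<le> y n / pi" "y n / pi < of_int k + 1" unfolding k_def by linarith+
    hence a1: "a \<le> y n" "y n < a + pi" unfolding a_def using pi_gt_zero
      by (simp_all add: field_simps)
    have "y n \<noteq> a" using sinnz[of n] by (auto simp: a_def)
    with a1 have a2: "a < y n" by simp
    let ?S = "E n ` ball c r"
    have conn: "connected ?S" unfolding E_def
      by (rule connected_continuous_image[OF iter_cont connected_ball])
    have cS: "z n \<in> ?S" using r by (simp add: z_def)
    have bad: False if "v \<in> ?S" "Im v = pi * of_int j" for v j
    proof -
      obtain w' where w': "w' \<in> ball c r" "v = E n w'" using \<open>v \<in> ?S\<close> by auto
      have "exp v \<in> \<real>" using that(2) by (simp add: complex_is_Real_iff Im_exp)
      moreover have "exp v \<in> E (Suc n) ` U" using w' ball by (auto simp: E_def)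
      ultimately show False using avoidR[of "Suc n"] by (auto simp: E_def)
    qed
    have strip: "a < Im (E n w) \<and> Im (E n w) < a + pi" if "w \<in> ball c r" for w
    proof (rule ccontr)
      have wS: "E n w \<in> ?S" using that by simp
      assume "\<not> ?thesis"
      hence "Im (E n w) \<le> a \<or> a + pi \<le> Im (E n w)" by linarith
      thus False
      proof
        assume "Im (E n w) \<le> a"
        then obtain v where "v \<in> ?S" "Im v = a" using conn_Im[OF conn wS cS, of a] a2 by (auto simp: y_def)
        thus False using bad[of v k] by (simp add: a_def)
      next
        assume "a + pi \<le> Im (E n w)"
        then obtain v where "v \<in> ?S" "Im v = a + pi" using conn_Im[OF conn cS wS, of "a + pi"] a1 by (auto simp: y_def)
        moreover have "a + pi = pi * of_int (k + 1)" by (simp add: a_def algebra_simps)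
        ultimately show False using bad[of v "k+1"] by simp
      qed
    qed
    have hol: "E n holomorphic_on ball c r" unfolding E_def by (rule iter_hol)
    have der: "(E n has_field_derivative (\<Prod>j\<in>{1..n}. z j)) (at c)"
      unfolding E_def z_def by (rule iter_deriv)
    have "norm (\<Prod>j\<in>{1..n}. z j) * r \<le> 2 * sin (Im (E n c) - a)"
      by (rule strip_schwarz[OF hol r der strip])
    also have "\<dots> \<le> 2 * \<bar>sin (y n)\<bar>"
      using abs_sin_shift[of "y n" k] by (simp add: y_def z_def a_def)
    finally show ?thesis by (simp add: prod_norm)
  qed
  define Q where "Q j = \<bar>y j\<bar> / \<bar>sin (y j)\<bar>" for j
  define P where "P n = (\<Prod>j\<in>{1..n}. Q j)" for n
  have qid: "P n * \<bar>sin (y n)\<bar> = \<bar>sin (y 0)\<bar> * (\<Prod>j\<in>{1..n}. norm (z j))" for n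
  proof (induction n)
    case 0 thus ?case by (simp add: P_def)
  next
    case (Suc n)
    have PS: "P (Suc n) = P n * Q (Suc n)" unfolding P_def by (subst prod.nat_ivl_Suc') (simp_all add: mult.commute)
    have ZS: "(\<Prod>j\<in>{1..Suc n}. norm (z j)) = (\<Prod>j\<in>{1..n}. norm (z j)) * norm (z (Suc n))"
      by (subst prod.nat_ivl_Suc') (simp_all add: mult.commute)
    have "P (Suc n) * \<bar>sin (y (Suc n))\<bar> = P n * \<bar>y (Suc n)\<bar>"
      using sinnz[of "Suc n"] by (simp add: PS Q_def)
    also have "\<dots> = P n * \<bar>sin (y n)\<bar> * exp (x n)" by (simp add: yS abs_mult)
    also have "\<dots> = \<bar>sin (y 0)\<bar> * (\<Prod>j\<in>{1..n}. norm (z j)) * norm (z (Suc n))" by (simp add: Suc nzS)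
    finally show ?case by (simp add: ZS mult.assoc)
  qed
  have Pbound: "P n \<le> 2 / r" for n
  proof -
    have "P n * \<bar>sin (y n)\<bar> * r = \<bar>sin (y 0)\<bar> * ((\<Prod>j\<in>{1..n}. norm (z j)) * r)" by (simp add: qid)
    also have "\<dots> \<le> 1 * (2 * \<bar>sin (y n)\<bar>)"
    proof (rule mult_mono)
      show "\<bar>sin (y 0)\<bar> \<le> 1" by (rule abs_sin_le_one)
      show "(\<Prod>j\<in>{1..n}. norm (z j)) * r \<le> 2 * \<bar>sin (y n)\<bar>" by (rule schw)
      show "(0::real) \<le> 1" by simp
      have "0 \<le> (\<Prod>j\<in>{1..n}. norm (z j))" by (rule prod_nonneg) simp
      thus "0 \<le> (\<Prod>j\<in>{1..n}. norm (z j)) * r" using r by simp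
    qed
    finally have "(P n * r) * \<bar>sin (y n)\<bar> \<le> (2) * \<bar>sin (y n)\<bar>" by (simp add: algebra_simps)
    hence "P n * r \<le> 2" using sinnz[of n] by simp
    thus ?thesis using r by (simp add: field_simps)
  qed
  have Q1: "Q j \<ge> 1" for j
    using abs_sin_x_le_abs_x[of "y j"] sinnz[of j] by (simp add: Q_def field_simps)
  have Qbig: "Q j \<ge> 20/17" if "\<bar>y j\<bar> \<ge> 1" for j
  proof -
    have "\<bar>sin (y j)\<bar> \<le> (17/20) * \<bar>y j\<bar>" by (rule sin_upper[OF that])
    thus ?thesis using sinnz[of j] by (simp add: Q_def field_simps)
  qed
  have P0: "P n \<ge> 0" for n unfolding P_def using Q1 by (intro prod_nonneg) (meson order.trans zero_le_one)
  have PSuc: "P (Suc n) = P n * Q (Suc n)" for n unfolding P_def by (subst prod.nat_ivl_Suc') (simp_all add: mult.commute)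
  have Pmono: "P m \<le> P n" if "m \<le> n" for m n
    using that
  proof (induction n)
    case 0 thus ?case by simp
  next
    case (Suc n)
    show ?case
    proof (cases "m = Suc n")
      case True thus ?thesis by simp
    next
      case False
      hence "P m \<le> P n" using Suc by simp
      also have "P n \<le> P n * Q (Suc n)" using P0[of n] Q1[of "Suc n"] by (simp add: mult_le_cancel_left1)
      finally show ?thesis by (simp add: PSuc)
    qed
  qed
  have "\<exists>J. \<forall>j\<ge>J. \<bar>y j\<bar> < 1"
  proof (rule ccontr)
    assume "\<not> ?thesis"
    hence inf: "\<forall>J. \<exists>j\<ge>J. \<bar>y j\<bar> \<ge> 1" by (auto simp: not_less)
    have "\<exists>n. P n \<ge> (20/17)^m" for m
    proof (induction m)
      case 0 show ?case using P_def by (intro exI[of _ 0]) simp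
    next
      case (Suc m)
      then obtain n where n: "P n \<ge> (20/17)^m" by blast
      from inf obtain j where j: "j \<ge> Suc n" "\<bar>y j\<bar> \<ge> 1" by blast
      then obtain i where i: "j = Suc i" "i \<ge> n" by (cases j) auto
      have "(20/17)^Suc m = (20/17)^m * (20/17::real)" by simp
      also have "\<dots> \<le> P i * Q j"
        by (rule mult_mono) (use n Pmono[OF i(2)] Qbig[OF j(2)] P0 in auto)
      also have "\<dots> = P j" using PSuc[of i] i(1) by simp
      finally show ?case by blast
    qed
    moreover obtain m where "2 / r < (20/17::real)^m" using real_arch_pow[of "20/17" "2/r"] by auto
    ultimately show False using Pbound by (meson not_le order.trans)
  qed
  then obtain J where J: "\<And>j. j \<ge> J \<Longrightarrow> \<bar>y j\<bar> < 1" by blast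
  have xpos: "x (Suc j) > 0" if "j \<ge> J" for j
  proof -
    have "cos (y j) \<ge> 1/2" using cos_lower J[OF that] by blast
    thus ?thesis by (simp add: xS)
  qed
  have xhalf: "x j \<ge> 1/2" if "j \<ge> J + 2" for j
  proof -
    define i where "i = j - 2"
    have i: "j = Suc (Suc i)" "i \<ge> J" using that unfolding i_def by arith+
    have p: "x (Suc i) > 0" by (rule xpos[OF i(2)])
    have c: "cos (y (Suc i)) \<ge> 1/2" using cos_lower J[of "Suc i"] i(2) by simp
    have "exp (x (Suc i)) \<ge> 1 + x (Suc i)" by (rule exp_ge_add_one_self)
    hence "exp (x (Suc i)) \<ge> 1" using p by linarith
    hence "exp (x (Suc i)) * cos (y (Suc i)) \<ge> 1 * (1/2)" using c by (intro mult_mono) auto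
    thus ?thesis by (simp add: i(1) xS)
  qed
  have grow: "\<bar>y (Suc j)\<bar> \<ge> (6/5) * \<bar>y j\<bar>" if "j \<ge> J + 2" for j
  proof -
    have s: "\<bar>sin (y j)\<bar> \<ge> (4/5) * \<bar>y j\<bar>" using sin_lower J[of j] that by simp
    have "exp (x j) \<ge> exp (1/2)" using xhalf[OF that] by simp
    moreover have "exp (1/2::real) \<ge> 1 + 1/2" by (rule exp_ge_add_one_self)
    ultimately have e: "exp (x j) \<ge> 3/2" by linarith
    have "(3/2) * ((4/5) * \<bar>y j\<bar>) \<le> exp (x j) * \<bar>sin (y j)\<bar>"
      by (rule mult_mono[OF e s]) auto
    thus ?thesis by (simp add: yS abs_mult)
  qed
  have growm: "\<bar>y (J + 2 + m)\<bar> \<ge> (6/5)^m * \<bar>y (J + 2)\<bar>" for m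
  proof (induction m)
    case 0 thus ?case by simp
  next
    case (Suc m)
    have "(6/5)^Suc m * \<bar>y (J + 2)\<bar> = (6/5) * ((6/5)^m * \<bar>y (J + 2)\<bar>)" by simp
    also have "\<dots> \<le> (6/5) * \<bar>y (J + 2 + m)\<bar>" using Suc.IH by (intro mult_left_mono) auto
    also have "\<dots> \<le> \<bar>y (Suc (J + 2 + m))\<bar>" by (rule grow) simp
    finally show ?case by simp
  qed
  have ypos: "\<bar>y (J + 2)\<bar> > 0" using ynz by simp
  obtain m where "1 / \<bar>y (J + 2)\<bar> < (6/5::real)^m" using real_arch_pow[of "6/5" "1 / \<bar>y (J + 2)\<bar>"] by auto
  hence "1 < (6/5)^m * \<bar>y (J + 2)\<bar>" using ypos by (simp add: field_simps)
  with growm[of m] J[of "J + 2 + m"] show False by simp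
qed



lemma main_lemma:
  fixes U :: "complex set"
  assumes U: "open U" "U \<noteq> {}"
    and avoid: "\<And>n. ((exp :: complex \<Rightarrow> complex) ^^ n) ` U \<inter> {z. z \<in> \<real> \<and> Re z \<le> 0} = {}"
    and case1: "\<And>t m. \<lbrakk>complex_of_real t \<in> ((exp :: complex \<Rightarrow> complex) ^^ m) ` U; t > 0\<rbrakk> \<Longrightarrow> False"
    and case2: "\<And>c r. \<lbrakk>ball c r \<subseteq> U; r > 0; \<And>n. ((exp::complex\<Rightarrow>complex) ^^ n) ` U \<inter> \<real> = {}\<rbrakk> \<Longrightarrow> False"
  shows False
proof -
  have R: "((exp::complex\<Rightarrow>complex) ^^ n) ` U \<inter> \<real> = {}" for n
  proof (rule ccontr)
    assume "\<not> ?thesis"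
    then obtain w where w: "w \<in> ((exp::complex\<Rightarrow>complex) ^^ n) ` U" "w \<in> \<real>" by blast
    have wr: "w = complex_of_real (Re w)" using w(2) by (simp add: complex_is_Real_iff complex_eq_iff)
    show False
    proof (cases "Re w \<le> 0")
      case True thus False using avoid[of n] w by blast
    next
      case False thus False using case1[of "Re w" n] w(1) wr by simp
    qed
  qed
  obtain c where "c \<in> U" using U(2) by blast
  then obtain r where "r > 0" "ball c r \<subseteq> U" using U(1) openE by blast
  thus False using case2 R by blast
qed


theorem mainTheorem5:
  fixes W :: "complex set"
  assumes "open W" and "W \<noteq> {}"
  shows "infinite {n :: nat. ((exp :: complex \<Rightarrow> complex) ^^ n) ` W \<inter> {z. z \<in> \<real> \<and> Re z \<le> 0} \<noteq> {}}"
proof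
  let ?S = "{n :: nat. ((exp :: complex \<Rightarrow> complex) ^^ n) ` W \<inter> {z. z \<in> \<real> \<and> Re z \<le> 0} \<noteq> {}}"
  assume fin: "finite ?S"
  obtain N where N: "\<forall>n\<in>?S. n < N" using fin finite_nat_set_iff_bounded by auto
  define U where "U = ((exp::complex\<Rightarrow>complex) ^^ N) ` W"
  have Uo: "open U" unfolding U_def by (rule iter_open[OF assms(1)])
  have Une: "U \<noteq> {}" using assms(2) by (simp add: U_def)
  have img: "((exp::complex\<Rightarrow>complex) ^^ n) ` U = ((exp::complex\<Rightarrow>complex) ^^ (n + N)) ` W" for n
  proof -
    have "((exp::complex\<Rightarrow>complex) ^^ (n + N)) = (exp ^^ n) \<circ> (exp ^^ N)" by (rule funpow_add)
    hence "((exp::complex\<Rightarrow>complex) ^^ (n + N)) ` W = (exp ^^ n) ` ((exp ^^ N) ` W)" by (simp only: image_comp)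
    thus ?thesis by (simp only: U_def)
  qed
  have avoid: "((exp :: complex \<Rightarrow> complex) ^^ n) ` U \<inter> {z. z \<in> \<real> \<and> Re z \<le> 0} = {}" for n
  proof -
    have "\<not> (n + N < N)" by simp
    hence "n + N \<notin> ?S" using N by blast
    hence "((exp :: complex \<Rightarrow> complex) ^^ (n + N)) ` W \<inter> {z. z \<in> \<real> \<and> Re z \<le> 0} = {}" by blast
    thus ?thesis by (simp only: img)
  qed
  show False
  proof (rule main_lemma[OF Uo Une avoid])
    fix t m assume "complex_of_real t \<in> ((exp :: complex \<Rightarrow> complex) ^^ m) ` U" "t > 0"
    thus False by (rule case1[OF Uo avoid])
  next
    fix c r assume "ball c r \<subseteq> U" "r > 0" "\<And>n. ((exp::complex\<Rightarrow>complex) ^^ n) ` U \<inter> \<real> = {}"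
    thus False by (rule case2)
  qed
qed

end
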